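(* Consider FedMoSWA with client sampling (described in the context) applied to $F=\frac1m\sum_{i=1}^m F_i$, where each $F_i$ is $\mu$-strongly convex ($\mu\ge0$ allowed) and $\beta$-smooth. Then for any $\tilde\eta:=\eta_l\alpha K\in[0,1/\beta]$, $$\mathcal{C}_t\le\left(1-\frac sm\right)\mathcal{C}_{t-1}+\frac sm\left(4\beta\left(\mathbb{E}[F(\boldsymbol{\theta}^{t-1})]-F(\boldsymbol{\theta}^\star)\right)+2\beta^2\mathcal{E}_t\right).$$
   Context: FedMoSWA with sampling: $m$ clients, in round $t$ a set $\mathcal{S}^t$ of $s$ clients is sampled uniformly. Server holds $\boldsymbol{\theta}^{t-1}$ and control variable $\mathbf{m}$; each client has control variable $\boldsymbol{c}_i$. Each sampled client sets $\boldsymbol{\theta}^t_{i,0}=\boldsymbol{\theta}^{t-1}$ and for $k=1,\dots,K$: $\boldsymbol{\theta}^t_{i,k}=\boldsymbol{\theta}^t_{i,k-1}-\eta_l(g_i(\boldsymbol{\theta}^t_{i,k-1})+\mathbf{m}-\boldsymbol{c}_i)$, with $g_i$ an unbiased stochastic gradient of $F_i$, then sets $\boldsymbol{c}_i^t=\frac1K\sum_{k=1}^K g_i(\boldsymbol{\theta}^t_{i,k-1})$ (non-sampled clients keep $\boldsymbol{c}_i^t=\boldsymbol{c}_i^{t-1}$). The server sets $\boldsymbol{\theta}^t=\boldsymbol{\theta}^{t-1}+\alpha\left(\frac1s\sum_{i\in\mathcal{S}^t}\boldsymbol{\theta}^t_{i,K}-\boldsymbol{\theta}^{t-1}\right)$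 and $\mathbf{m}^t=\mathbf{m}^{t-1}+\gamma\frac1s\sum_{i\in\mathcal{S}^t}(\boldsymbol{c}_i^t-\mathbf{m}^{t-1})$. $\boldsymbol{\theta}^\star$ minimizes $F$. $\mathcal{E}_t:=\frac{1}{Km}\sum_{k=1}^K\sum_{i=1}^m\mathbb{E}\|\boldsymbol{\theta}^t_{i,k}-\boldsymbol{\theta}^{t-1}\|^2$; $\mathcal{C}_t:=\frac1m\sum_{i=1}^m\|\mathbb{E}[\boldsymbol{c}_i^t]-\nabla F_i(\boldsymbol{\theta}^\star)\|^2$. *)

theory Defs
  imports "HOL-Probability.Probability"
begin

definition has_gradient_everywhere :: "('a::euclidean_space \<Rightarrow> real) \<Rightarrow> ('a \<Rightarrow> 'a) \<Rightarrow> bool" where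
  "has_gradient_everywhere f gf \<longleftrightarrow> (\<forall>x. (f has_derivative (\<lambda>h. gf x \<bullet> h)) (at x))"

definition strongly_convex_grad :: "real \<Rightarrow> ('a::euclidean_space \<Rightarrow> real) \<Rightarrow> ('a \<Rightarrow> 'a) \<Rightarrow> bool" where
  "strongly_convex_grad mu f gf \<longleftrightarrow>
     (\<forall>x y. f y \<ge> f x + gf x \<bullet> (y - x) + mu / 2 * (norm (y - x))\<^sup>2)"

definition smooth_grad :: "real \<Rightarrow> ('a::euclidean_space \<Rightarrow> 'a) \<Rightarrow> bool" where
  "smooth_grad beta gf \<longleftrightarrow> (\<forall>x y. norm (gf x - gf y) \<le> beta * norm (x - y))"

definition uniform_subsets :: "nat \<Rightarrow> nat \<Rightarrow> nat set pmf" where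
  "uniform_subsets m s = pmf_of_set {A. A \<subseteq> {..<m} \<and> card A = s}"

definition sq_integrable :: "'w measure \<Rightarrow> ('w \<Rightarrow> 'a::euclidean_space) \<Rightarrow> bool" where
  "sq_integrable M X \<longleftrightarrow> X \<in> borel_measurable M \<and> integrable M X \<and> integrable M (\<lambda>w. (norm (X w))\<^sup>2)"

end

theory Submission
  imports Defs
begin



lemma descent_lemma:
  fixes f :: "'a::euclidean_space \<Rightarrow> real"
  assumes g: "has_gradient_everywhere f gf" and sm: "smooth_grad beta gf"
  shows "f y \<le> f x + gf x \<bullet> (y - x) + beta / 2 * (norm (y - x))\<^sup>2"
proof -
  define d where "d = y - x"
  define h where "h = (\<lambda>\<tau>::real. f (x + \<tau> *\<^sub>R d) - \<tau> * (gf x \<bullet> d) - beta / 2 * \<tau>\<^sup>2 * (norm d)\<^sup>2)"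
  have "h 1 \<le> h 0"
  proof (rule DERIV_nonpos_imp_nonincreasing[of 0 1 h])
    fix \<tau> :: real assume t: "0 \<le> \<tau>" "\<tau> \<le> 1"
    have d1: "((\<lambda>\<tau>. x + \<tau> *\<^sub>R d) has_derivative (\<lambda>h. h *\<^sub>R d)) (at \<tau>)"
      by (auto intro!: derivative_eq_intros)
    have d2: "(f has_derivative (\<lambda>h. gf (x + \<tau> *\<^sub>R d) \<bullet> h)) (at (x + \<tau> *\<^sub>R d))"
      using g unfolding has_gradient_everywhere_def by blast
    have "((\<lambda>\<tau>. f (x + \<tau> *\<^sub>R d)) has_derivative (\<lambda>h. gf (x + \<tau> *\<^sub>R d) \<bullet> (h *\<^sub>R d))) (at \<tau>)"
      using has_derivative_compose[OF d1 d2] by simp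
    hence "((\<lambda>\<tau>. f (x + \<tau> *\<^sub>R d)) has_real_derivative (gf (x + \<tau> *\<^sub>R d) \<bullet> d)) (at \<tau>)"
    proof -
      assume a: "((\<lambda>\<tau>. f (x + \<tau> *\<^sub>R d)) has_derivative (\<lambda>h. gf (x + \<tau> *\<^sub>R d) \<bullet> (h *\<^sub>R d))) (at \<tau>)"
      have "(\<lambda>h. gf (x + \<tau> *\<^sub>R d) \<bullet> (h *\<^sub>R d)) = (*) (gf (x + \<tau> *\<^sub>R d) \<bullet> d)"
        by (auto simp: fun_eq_iff)
      with a show ?thesis by (simp add: has_field_derivative_def)
    qed
    hence D: "(h has_real_derivative (gf (x + \<tau> *\<^sub>R d) \<bullet> d - gf x \<bullet> d - beta / 2 * (2 * \<tau>) * (norm d)\<^sup>2)) (at \<tau>)"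
      unfolding h_def by (auto intro!: derivative_eq_intros)
    have "gf (x + \<tau> *\<^sub>R d) \<bullet> d - gf x \<bullet> d = (gf (x + \<tau> *\<^sub>R d) - gf x) \<bullet> d"
      by (simp add: inner_diff_left)
    also have "\<dots> \<le> norm (gf (x + \<tau> *\<^sub>R d) - gf x) * norm d"
      by (rule norm_cauchy_schwarz)
    also have "\<dots> \<le> beta * norm (\<tau> *\<^sub>R d) * norm d"
      using sm unfolding smooth_grad_def
      by (metis add_diff_cancel_left' mult_right_mono norm_ge_zero)
    also have "\<dots> = beta * \<tau> * (norm d)\<^sup>2" using t by (simp add: power2_eq_square)
    finally show "\<exists>y. (h has_real_derivative y) (at \<tau>) \<and> y \<le> 0"
      using D by (intro exI[of _ "gf (x + \<tau> *\<^sub>R d) \<bullet> d - gf x \<bullet> d - beta / 2 * (2 * \<tau>) * (norm d)\<^sup>2"]) auto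
  qed simp
  thus ?thesis unfolding h_def d_def by simp
qed

lemma cocoercive:
  fixes f :: "'a::euclidean_space \<Rightarrow> real"
  assumes g: "has_gradient_everywhere f gf" and sm: "smooth_grad beta gf"
    and cv: "strongly_convex_grad mu f gf" and mu: "0 \<le> mu" and b: "0 < beta"
  shows "(norm (gf y - gf x))\<^sup>2 \<le> 2 * beta * (f y - f x - gf x \<bullet> (y - x))"
proof -
  define D where "D = gf y - gf x"
  define w where "w = y - (1 / beta) *\<^sub>R D"
  have c1: "f x + gf x \<bullet> (w - x) \<le> f w"
    using cv mu unfolding strongly_convex_grad_def
    by (smt (verit) mult_nonneg_nonneg zero_le_power2 divide_nonneg_pos)
  have c2: "f w \<le> f y + gf y \<bullet> (w - y) + beta / 2 * (norm (w - y))\<^sup>2"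
    by (rule descent_lemma[OF g sm])
  have wy: "w - y = - (1 / beta) *\<^sub>R D" unfolding w_def by simp
  have e1: "gf y \<bullet> (w - y) - gf x \<bullet> (w - y) = - (1/beta) * (norm D)\<^sup>2"
    unfolding wy D_def by (simp add: inner_diff_left power2_norm_eq_inner algebra_simps)
  have e2: "beta / 2 * (norm (w - y))\<^sup>2 = ((1/beta) * (norm D)\<^sup>2) / 2"
    unfolding wy using b by (simp add: power2_eq_square field_simps)
  have e3: "gf x \<bullet> (w - x) = gf x \<bullet> (w - y) + gf x \<bullet> (y - x)"
    by (simp add: inner_diff_right)
  have "((1/beta) * (norm D)\<^sup>2) / 2 \<le> f y - f x - gf x \<bullet> (y - x)"
    using c1 c2 e1 e2 e3 by linarith
  thus ?thesis unfolding D_def using b by (simp add: field_simps)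
qed




lemma sq_ineq: "(norm ((a::'a::real_normed_vector) + b))\<^sup>2 \<le> 2 * (norm a)\<^sup>2 + 2 * (norm b)\<^sup>2"
proof -
  have "norm (a + b) \<le> norm a + norm b" by (rule norm_triangle_ineq)
  hence "(norm (a + b))\<^sup>2 \<le> (norm a + norm b)\<^sup>2" by (simp add: power_mono)
  also have "\<dots> \<le> 2 * (norm a)\<^sup>2 + 2 * (norm b)\<^sup>2"
    by (smt (verit) sum_squares_bound power2_sum)
  finally show ?thesis .
qed

context prob_space
begin

lemma sq_add:
  assumes "sq_integrable M X" "sq_integrable M Y"
  shows "sq_integrable M (\<lambda>w. X w + Y w)"
  unfolding sq_integrable_def
proof (intro conjI)
  show m: "(\<lambda>w. X w + Y w) \<in> borel_measurable M" using assms unfolding sq_integrable_def by auto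
  show "integrable M (\<lambda>w. X w + Y w)" using assms unfolding sq_integrable_def by auto
  have i: "integrable M (\<lambda>w. 2 * (norm (X w))\<^sup>2 + 2 * (norm (Y w))\<^sup>2)"
    using assms unfolding sq_integrable_def by auto
  show "integrable M (\<lambda>w. (norm (X w + Y w))\<^sup>2)"
    by (rule Bochner_Integration.integrable_bound[OF i]) (use m sq_ineq in auto)
qed

lemma sq_scale:
  assumes "sq_integrable M X"
  shows "sq_integrable M (\<lambda>w. c *\<^sub>R X w)"
  using assms unfolding sq_integrable_def by (auto simp: power_mult_distrib)

lemma sq_const: "sq_integrable M (\<lambda>w. c)"
  unfolding sq_integrable_def by auto

lemma sq_diff:
  assumes "sq_integrable M X" "sq_integrable M Y"
  shows "sq_integrable M (\<lambda>w. X w - Y w)"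
  using sq_add[OF assms(1) sq_scale[OF assms(2), of "-1"]] by simp

lemma sq_lip:
  assumes X: "sq_integrable M X" and L: "0 \<le> L" and f: "\<And>x y. norm (f x - f y) \<le> L * norm (x - y)"
  shows "sq_integrable M (\<lambda>w. f (X w))"
proof -
  have "L-lipschitz_on UNIV f"
    by (rule lipschitz_onI) (use f L in \<open>auto simp: dist_norm\<close>)
  hence "continuous_on UNIV f" by (rule lipschitz_on_continuous_on)
  hence fb: "f \<in> borel_measurable borel" by (rule borel_measurable_continuous_onI)
  have m: "(\<lambda>w. f (X w)) \<in> borel_measurable M"
    using X fb unfolding sq_integrable_def by (auto intro: measurable_compose)
  have b1: "norm (f x) \<le> norm (f 0) + L * norm x" for x
    using f[of x 0] norm_triangle_ineq2[of "f x" "f 0"] by simp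
  have i1: "integrable M (\<lambda>w. norm (f 0) + L * norm (X w))"
    using X unfolding sq_integrable_def by auto
  have i2: "integrable M (\<lambda>w. 2 * (norm (f 0))\<^sup>2 + 2 * L\<^sup>2 * (norm (X w))\<^sup>2)"
    using X unfolding sq_integrable_def by auto
  have b2: "(norm (f x))\<^sup>2 \<le> 2 * (norm (f 0))\<^sup>2 + 2 * L\<^sup>2 * (norm x)\<^sup>2" for x
  proof -
    have "(norm (f x))\<^sup>2 \<le> (norm (f 0) + L * norm x)\<^sup>2"
      using b1[of x] by (simp add: power_mono)
    also have "\<dots> \<le> 2 * (norm (f 0))\<^sup>2 + 2 * (L * norm x)\<^sup>2"
      by (smt (verit) sum_squares_bound power2_sum)
    finally show ?thesis by (simp add: power_mult_distrib)
  qed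
  show ?thesis unfolding sq_integrable_def
  proof (intro conjI m)
    show "integrable M (\<lambda>w. f (X w))"
      by (rule Bochner_Integration.integrable_bound[OF i1 m]) (use b1 L in \<open>auto intro!: AE_I2 simp: abs_le_iff\<close>)
    show "integrable M (\<lambda>w. (norm (f (X w)))\<^sup>2)"
      by (rule Bochner_Integration.integrable_bound[OF i2]) (use m b2 in auto)
  qed
qed

lemma sq_jensen:
  assumes X: "sq_integrable M X"
  shows "(norm (expectation X))\<^sup>2 \<le> expectation (\<lambda>w. (norm (X w))\<^sup>2)"
proof -
  have "norm (expectation X) \<le> expectation (\<lambda>w. norm (X w))" by (rule integral_norm_bound)
  hence "(norm (expectation X))\<^sup>2 \<le> (expectation (\<lambda>w. norm (X w)))\<^sup>2"
    by (simp add: power_mono)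
  also have "\<dots> \<le> expectation (\<lambda>w. (norm (X w))\<^sup>2)"
    using X unfolding sq_integrable_def
    by (intro jensens_inequality[where I=UNIV and q=power2]) (auto simp: convex_power2)
  finally show ?thesis .
qed

end



lemma card_subsets_with:
  assumes i: "i < m" and s: "1 \<le> s"
  shows "card {A. A \<subseteq> {..<m} \<and> card A = s \<and> i \<in> A} = (m - 1) choose (s - 1)"
proof -
  let ?B = "{B. B \<subseteq> {..<m} - {i} \<and> card B = s - 1}"
  have fin: "finite ({..<m} - {i})" by simp
  have cB: "card ?B = (m - 1) choose (s - 1)"
    using n_subsets[OF fin, of "s - 1"] i by simp
  have inj: "inj_on (insert i) ?B"
    by (rule inj_onI) (metis (no_types, lifting) Diff_insert_absorb insert_Diff_single
        mem_Collect_eq subset_Diff_insert)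
  have img: "insert i ` ?B = {A. A \<subseteq> {..<m} \<and> card A = s \<and> i \<in> A}"
  proof (rule set_eqI, rule iffI)
    fix A assume "A \<in> insert i ` ?B"
    then obtain B where B: "B \<in> ?B" "A = insert i B" by blast
    have "finite B" using B(1) finite_subset[OF _ fin] by auto
    moreover have "i \<notin> B" using B(1) by auto
    ultimately have "card A = s" using B s by auto
    thus "A \<in> {A. A \<subseteq> {..<m} \<and> card A = s \<and> i \<in> A}" using B i by auto
  next
    fix A assume A: "A \<in> {A. A \<subseteq> {..<m} \<and> card A = s \<and> i \<in> A}"
    hence "finite A" using finite_subset by blast
    hence "card (A - {i}) = s - 1" using A by (simp add: card_Diff_singleton)
    hence "A - {i} \<in> ?B" using A by auto
    moreover have "A = insert i (A - {i})" using A by auto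
    ultimately show "A \<in> insert i ` ?B" by blast
  qed
  show ?thesis using card_image[OF inj] img cB by simp
qed

lemma prob_in_uniform:
  assumes i: "i < m" and s: "1 \<le> s" "s \<le> m"
  shows "measure_pmf.prob (uniform_subsets m s) {A. i \<in> A} = real s / real m"
proof -
  let ?U = "{A. A \<subseteq> {..<m} \<and> card A = s}"
  have fU: "finite ?U" by (rule finite_subset[of _ "Pow {..<m}"]) auto
  have cU: "card ?U = m choose s" using n_subsets[of "{..<m}" s] by simp
  have pos: "0 < m choose s" using s by simp
  hence "card ?U \<noteq> 0" using cU by simp
  hence ne: "?U \<noteq> {}" by auto
  have int: "?U \<inter> {A. i \<in> A} = {A. A \<subseteq> {..<m} \<and> card A = s \<and> i \<in> A}" by auto
  have key: "s * (m choose s) = m * ((m - 1) choose (s - 1))"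
    using times_binomial_minus1_eq[of s m] s by simp
  have "measure_pmf.prob (uniform_subsets m s) {A. i \<in> A} = real ((m - 1) choose (s - 1)) / real (m choose s)"
    unfolding uniform_subsets_def using measure_pmf_of_set[OF ne fU] int cU card_subsets_with[OF i s(1)]
    by simp
  also have "\<dots> = real s / real m"
  proof -
    have "real s * real (m choose s) = real m * real ((m - 1) choose (s - 1))"
      using key by (metis of_nat_mult)
    thus ?thesis using pos i by (simp add: field_simps)
  qed
  finally show ?thesis .
qed

context prob_space
begin

lemma indep_indicator_integral:
  fixes X :: "'a \<Rightarrow> 'b::euclidean_space" and S' :: "'a \<Rightarrow> nat set"
  assumes Sm: "S' \<in> measurable M (count_space UNIV)"
    and H: "subalgebra M H"
    and ind: "indep_set (sets (vimage_algebra (space M) S' (count_space UNIV))) (sets H)"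
    and XH: "X \<in> borel_measurable H" and Xi: "integrable M X"
  shows "(LINT w|M. (if i \<in> S' w then X w else 0)) = prob {w\<in>space M. i \<in> S' w} *\<^sub>R (LINT w|M. X w)"
proof -
  define A where "A = {w\<in>space M. i \<in> S' w}"
  have A_eq: "A = S' -` {T. i \<in> T} \<inter> space M" unfolding A_def by auto
  have As: "A \<in> sets M" unfolding A_eq by (rule measurable_sets[OF Sm]) auto
  have sp: "space H = space M" using H unfolding subalgebra_def by auto
  have XM: "X \<in> borel_measurable M" by (rule measurable_from_subalg[OF H XH])
  have eq1: "(LINT w|M. (if i \<in> S' w then X w else 0)) = (LINT w|M. indicator A w *\<^sub>R X w)"
    by (rule Bochner_Integration.integral_cong) (auto simp: A_def indicator_def)
  have iA: "integrable M (\<lambda>w. indicator A w *\<^sub>R X w)"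
    by (rule integrable_mult_indicator[OF As Xi])
  have "(LINT w|M. indicator A w *\<^sub>R X w) = prob A *\<^sub>R (LINT w|M. X w)"
  proof (rule euclidean_eqI)
    fix b :: 'b assume b: "b \<in> Basis"
    have Xb_H: "(\<lambda>w. X w \<bullet> b) \<in> borel_measurable H" using XH by auto
    have Xb_M: "(\<lambda>w. X w \<bullet> b) \<in> borel_measurable M" using XM by auto
    have indA: "(indicator A :: 'a \<Rightarrow> real) \<in> borel_measurable M" using As by auto
    have s1: "sigma_sets (space M) {(indicator A :: 'a \<Rightarrow> real) -` B \<inter> space M |B. B \<in> sets borel}
              \<subseteq> sets (vimage_algebra (space M) S' (count_space UNIV))"
    proof -
      have "{(indicator A :: 'a \<Rightarrow> real) -` B \<inter> space M |B. B \<in> sets borel}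
            \<subseteq> sets (vimage_algebra (space M) S' (count_space UNIV))"
      proof
        fix Z assume "Z \<in> {(indicator A :: 'a \<Rightarrow> real) -` B \<inter> space M |B. B \<in> sets borel}"
        then obtain B where Z: "Z = (indicator A :: 'a \<Rightarrow> real) -` B \<inter> space M" by blast
        have Zeq: "Z = S' -` {T. (if i \<in> T then 1 else 0 :: real) \<in> B} \<inter> space M"
          unfolding Z A_def by (auto simp: indicator_def)
        have "S' -` {T. (if i \<in> T then 1 else 0 :: real) \<in> B} \<inter> space M
              \<in> {S' -` C \<inter> space M | C. C \<in> sets (count_space UNIV)}"
          by (rule CollectI, rule exI[of _ "{T. (if i \<in> T then 1 else 0 :: real) \<in> B}"]) simp
        moreover have "sets (vimage_algebra (space M) S' (count_space UNIV)) = {S' -` C \<inter> space M | C. C \<in> sets (count_space UNIV)}"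
          by (rule sets_vimage_algebra2) simp
        ultimately show "Z \<in> sets (vimage_algebra (space M) S' (count_space UNIV))"
          using Zeq by simp
      qed
      thus ?thesis using sets.sigma_sets_subset[of _ "vimage_algebra (space M) S' (count_space UNIV)"]
        by (simp add: space_vimage_algebra)
    qed
    have s2: "sigma_sets (space M) {(\<lambda>w. X w \<bullet> b) -` B \<inter> space M |B. B \<in> sets borel} \<subseteq> sets H"
    proof -
      have "{(\<lambda>w. X w \<bullet> b) -` B \<inter> space M |B. B \<in> sets borel} \<subseteq> sets H"
        using Xb_H sp by (auto simp: measurable_def)
      thus ?thesis using sets.sigma_sets_subset[of _ H] sp by simp
    qed
    have "indep_set (sigma_sets (space M) {(indicator A :: 'a \<Rightarrow> real) -` B \<inter> space M |B. B \<in> sets borel})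
                    (sigma_sets (space M) {(\<lambda>w. X w \<bullet> b) -` B \<inter> space M |B. B \<in> sets borel})"
      using ind unfolding indep_set_def
      by (rule indep_sets_mono_sets) (use s1 s2 in \<open>auto split: bool.split\<close>)
    hence iv: "indep_var borel (indicator A :: 'a \<Rightarrow> real) borel (\<lambda>w. X w \<bullet> b)"
      using indA Xb_M by (simp add: indep_var_eq)
    have ib: "integrable M (\<lambda>w. X w \<bullet> b)" using Xi by auto
    have iI: "integrable M (indicator A :: 'a \<Rightarrow> real)"
      using integrable_mult_indicator[OF As integrable_const[of "1::real"]] by simp
    have "(LINT w|M. indicator A w *\<^sub>R X w) \<bullet> b = (LINT w|M. (indicator A w *\<^sub>R X w) \<bullet> b)"
      using iA by (rule integral_inner_left[symmetric])
    also have "\<dots> = (LINT w|M. indicator A w * (X w \<bullet> b))" by simp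
    also have "\<dots> = (LINT w|M. indicator A w) * (LINT w|M. X w \<bullet> b)"
      by (rule indep_var_lebesgue_integral[OF iv iI ib])
    also have "\<dots> = prob A * ((LINT w|M. X w) \<bullet> b)"
      using As Xi by (simp add: integral_inner_left)
    finally show "(LINT w|M. indicator A w *\<^sub>R X w) \<bullet> b = (prob A *\<^sub>R (LINT w|M. X w)) \<bullet> b"
      by simp
  qed
  thus ?thesis using eq1 unfolding A_def by simp
qed

end



lemma grad_sum_zero:
  fixes F :: "nat \<Rightarrow> 'a::euclidean_space \<Rightarrow> real"
  assumes grad: "\<And>i. i < m \<Longrightarrow> has_gradient_everywhere (F i) (gradF i)"
    and m: "1 \<le> m"
    and opt: "\<And>x. (1 / real m) * (\<Sum>i<m. F i xs) \<le> (1 / real m) * (\<Sum>i<m. F i x)"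
  shows "(\<Sum>i<m. gradF i xs) = 0"
proof -
  have d: "((\<lambda>x. \<Sum>i<m. F i x) has_derivative (\<lambda>h. \<Sum>i<m. gradF i xs \<bullet> h)) (at xs)"
    by (rule has_derivative_sum) (use grad in \<open>auto simp: has_gradient_everywhere_def\<close>)
  have mn: "\<forall>y\<in>UNIV. (\<Sum>i<m. F i xs) \<le> (\<Sum>i<m. F i y)"
  proof
    fix y :: 'a
    have "(1 / real m) * (\<Sum>i<m. F i xs) \<le> (1 / real m) * (\<Sum>i<m. F i y)" by (rule opt)
    moreover have "0 < 1 / real m" using m by simp
    ultimately show "(\<Sum>i<m. F i xs) \<le> (\<Sum>i<m. F i y)" by (rule mult_left_le_imp_le)
  qed
  have "(\<lambda>h. \<Sum>i<m. gradF i xs \<bullet> h) = (\<lambda>v. 0)"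
    by (rule differential_zero_maxmin[of xs UNIV, OF _ _ d]) (use mn in auto)
  from fun_cong[OF this, of "\<Sum>i<m. gradF i xs"]
  have "(\<Sum>i<m. gradF i xs \<bullet> (\<Sum>i<m. gradF i xs)) = 0" by simp
  hence "(\<Sum>i<m. gradF i xs) \<bullet> (\<Sum>i<m. gradF i xs) = 0" by (simp add: inner_sum_left)
  thus ?thesis by simp
qed

lemma avg_norm_sq:
  fixes u :: "nat \<Rightarrow> 'a::real_normed_vector"
  assumes K: "1 \<le> K"
  shows "(norm ((1 / real K) *\<^sub>R (\<Sum>k\<in>{1..K}. u k)))\<^sup>2 \<le> (1 / real K) * (\<Sum>k\<in>{1..K}. (norm (u k))\<^sup>2)"
proof -
  have "norm (\<Sum>k\<in>{1..K}. u k) \<le> (\<Sum>k\<in>{1..K}. norm (u k))" by (rule norm_sum)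
  hence "(norm (\<Sum>k\<in>{1..K}. u k))\<^sup>2 \<le> (\<Sum>k\<in>{1..K}. norm (u k))\<^sup>2" by (simp add: power_mono)
  also have "\<dots> \<le> (\<Sum>k\<in>{1..K}. (norm (u k))\<^sup>2) * real K"
    using sum_squared_le_sum_of_squares[of "\<lambda>k. norm (u k)" "{1..K}"] by simp
  finally have h: "(norm (\<Sum>k\<in>{1..K}. u k))\<^sup>2 \<le> (\<Sum>k\<in>{1..K}. (norm (u k))\<^sup>2) * real K" .
  have "(norm ((1 / real K) *\<^sub>R (\<Sum>k\<in>{1..K}. u k)))\<^sup>2 = (norm (\<Sum>k\<in>{1..K}. u k))\<^sup>2 / (real K)\<^sup>2"
    using K by (simp add: power_divide)
  also have "\<dots> \<le> (\<Sum>k\<in>{1..K}. (norm (u k))\<^sup>2) * real K / (real K)\<^sup>2"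
    using h by (simp add: divide_right_mono)
  also have "\<dots> = (1 / real K) * (\<Sum>k\<in>{1..K}. (norm (u k))\<^sup>2)"
    using K by (simp add: power2_eq_square)
  finally show ?thesis .
qed

lemma convex_norm_sq:
  fixes u v :: "'a::real_inner"
  assumes p: "0 \<le> p" "p \<le> 1"
  shows "(norm (p *\<^sub>R u + (1 - p) *\<^sub>R v))\<^sup>2 \<le> p * (norm u)\<^sup>2 + (1 - p) * (norm v)\<^sup>2"
proof -
  have "p * (norm u)\<^sup>2 + (1 - p) * (norm v)\<^sup>2 - (norm (p *\<^sub>R u + (1 - p) *\<^sub>R v))\<^sup>2
        = p * (1 - p) * (norm (u - v))\<^sup>2"
    by (simp add: power2_norm_eq_inner inner_add_left inner_add_right inner_diff_left
        inner_diff_right inner_commute algebra_simps)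
  moreover have "0 \<le> p * (1 - p) * (norm (u - v))\<^sup>2" using p by simp
  ultimately show ?thesis by linarith
qed



context prob_space
begin

lemma integrable_if_in:
  fixes X :: "'a \<Rightarrow> 'b::euclidean_space" and S' :: "'a \<Rightarrow> nat set"
  assumes Sm: "S' \<in> measurable M (count_space UNIV)" and Xi: "integrable M X"
  shows "integrable M (\<lambda>w. if i \<in> S' w then X w else 0)"
proof -
  define A where "A = {w\<in>space M. i \<in> S' w}"
  have A_eq: "A = S' -` {T. i \<in> T} \<inter> space M" unfolding A_def by auto
  have As: "A \<in> sets M" unfolding A_eq by (rule measurable_sets[OF Sm]) auto
  have "integrable M (\<lambda>w. indicator A w *\<^sub>R X w)" by (rule integrable_mult_indicator[OF As Xi])
  moreover have "integrable M (\<lambda>w. indicator A w *\<^sub>R X w) = integrable M (\<lambda>w. if i \<in> S' w then X w else 0)"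
    by (rule Bochner_Integration.integrable_cong) (auto simp: A_def indicator_def)
  ultimately show ?thesis by simp
qed

end

lemma shift_sum:
  fixes a :: "nat \<Rightarrow> real"
  shows "(\<Sum>k\<in>{1..K}. a (k - 1)) + a K = (\<Sum>k\<in>{1..K}. a k) + a 0"
proof (induction K)
  case 0 then show ?case by simp
next
  case (Suc K) then show ?case by (simp add: sum.cl_ivl_Suc)
qed

lemma sum_grad_bound:
  fixes F :: "nat \<Rightarrow> 'a::euclidean_space \<Rightarrow> real"
  assumes grad: "\<And>i. i < m \<Longrightarrow> has_gradient_everywhere (F i) (gradF i)"
    and mu: "0 \<le> mu" and sconv: "\<And>i. i < m \<Longrightarrow> strongly_convex_grad mu (F i) (gradF i)"
    and b: "0 < beta" and smooth: "\<And>i. i < m \<Longrightarrow> smooth_grad beta (gradF i)"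
    and z: "(\<Sum>i<m. gradF i xs) = 0"
  shows "(\<Sum>i<m. (norm (gradF i x - gradF i xs))\<^sup>2) \<le> 2 * beta * ((\<Sum>i<m. F i x) - (\<Sum>i<m. F i xs))"
proof -
  have "(\<Sum>i<m. (norm (gradF i x - gradF i xs))\<^sup>2) \<le> (\<Sum>i<m. 2 * beta * (F i x - F i xs - gradF i xs \<bullet> (x - xs)))"
    by (rule sum_mono) (rule cocoercive[OF grad smooth sconv mu b], auto)
  also have "\<dots> = 2 * beta * ((\<Sum>i<m. F i x) - (\<Sum>i<m. F i xs) - (\<Sum>i<m. gradF i xs) \<bullet> (x - xs))"
    by (simp add: sum_distrib_left[symmetric] sum_subtractf inner_sum_left)
  also have "\<dots> = 2 * beta * ((\<Sum>i<m. F i x) - (\<Sum>i<m. F i xs))" using z by simp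
  finally show ?thesis .
qed


theorem mainTheorem4:
  fixes M :: "'w measure"
    and m s K :: nat
    and F :: "nat \<Rightarrow> 'a::euclidean_space \<Rightarrow> real"
    and gradF :: "nat \<Rightarrow> 'a \<Rightarrow> 'a"
    and mu beta eta_l alpha gamma :: real
    and theta_star :: 'a
    and theta :: "nat \<Rightarrow> 'w \<Rightarrow> 'a"                  (* server model theta^t *)
    and mv :: "nat \<Rightarrow> 'w \<Rightarrow> 'a"                     (* server control variable m^t *)
    and c :: "nat \<Rightarrow> nat \<Rightarrow> 'w \<Rightarrow> 'a"              (* client control variables c_i^t *)
    and S :: "nat \<Rightarrow> 'w \<Rightarrow> nat set"                (* sampled set S^t *)
    and theta_loc :: "nat \<Rightarrow> nat \<Rightarrow> nat \<Rightarrow> 'w \<Rightarrow> 'a" (* theta^t_{i,k} *)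
    and G :: "nat \<Rightarrow> nat \<Rightarrow> nat \<Rightarrow> 'w \<Rightarrow> 'a"         (* G t i k = g_i(theta^t_{i,k-1}) *)
    and Hist :: "nat \<Rightarrow> 'w measure"
    and Fh :: "nat \<Rightarrow> nat \<Rightarrow> nat \<Rightarrow> 'w measure"
    and t :: nat
  assumes M: "prob_space M"
    and m_pos: "1 \<le> m" and s_range: "1 \<le> s" "s \<le> m" and K_pos: "1 \<le> K"
    and grad: "\<And>i. i < m \<Longrightarrow> has_gradient_everywhere (F i) (gradF i)"
    and mu_nonneg: "0 \<le> mu"
    and sconv: "\<And>i. i < m \<Longrightarrow> strongly_convex_grad mu (F i) (gradF i)"
    and beta_pos: "0 < beta"
    and smooth: "\<And>i. i < m \<Longrightarrow> smooth_grad beta (gradF i)"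
    and opt: "\<And>x. (1 / real m) * (\<Sum>i<m. F i theta_star) \<le> (1 / real m) * (\<Sum>i<m. F i x)"
    and step_nonneg: "0 \<le> eta_l * alpha * real K"
    and step_le: "eta_l * alpha * real K \<le> 1 / beta"
    \<comment> \<open>local updates of FedMoSWA (virtual trajectories for every client)\<close>
    and loc0: "\<And>r i w. 1 \<le> r \<Longrightarrow> i < m \<Longrightarrow> theta_loc r i 0 w = theta (r - 1) w"
    and locstep: "\<And>r i k w. 1 \<le> r \<Longrightarrow> i < m \<Longrightarrow> 1 \<le> k \<Longrightarrow> k \<le> K \<Longrightarrow>
        theta_loc r i k w = theta_loc r i (k - 1) w - eta_l *\<^sub>R (G r i k w + mv (r - 1) w - c (r - 1) i w)"
    and cupd: "\<And>r i w. 1 \<le> r \<Longrightarrow> i < m \<Longrightarrow>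
        c r i w = (if i \<in> S r w then (1 / real K) *\<^sub>R (\<Sum>k\<in>{1..K}. G r i k w) else c (r - 1) i w)"
    and thetaupd: "\<And>r w. 1 \<le> r \<Longrightarrow>
        theta r w = theta (r - 1) w + alpha *\<^sub>R ((1 / real s) *\<^sub>R (\<Sum>i\<in>S r w. theta_loc r i K w) - theta (r - 1) w)"
    and mvupd: "\<And>r w. 1 \<le> r \<Longrightarrow>
        mv r w = mv (r - 1) w + gamma *\<^sub>R ((1 / real s) *\<^sub>R (\<Sum>i\<in>S r w. (c r i w - mv (r - 1) w)))"
    \<comment> \<open>uniform client sampling, independent of the current control variables and gradient noise\<close>
    and S_meas: "\<And>r. 1 \<le> r \<Longrightarrow> S r \<in> measurable M (count_space UNIV)"
    and S_unif: "\<And>r. 1 \<le> r \<Longrightarrow> distr M (count_space UNIV) (S r) = measure_pmf (uniform_subsets m s)"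
    and Hist_sub: "\<And>r. 1 \<le> r \<Longrightarrow> subalgebra M (Hist r)"
    and Hist_c: "\<And>r i. 1 \<le> r \<Longrightarrow> i < m \<Longrightarrow> c (r - 1) i \<in> borel_measurable (Hist r)"
    and Hist_G: "\<And>r i k. 1 \<le> r \<Longrightarrow> i < m \<Longrightarrow> 1 \<le> k \<Longrightarrow> k \<le> K \<Longrightarrow> G r i k \<in> borel_measurable (Hist r)"
    and S_indep: "\<And>r. 1 \<le> r \<Longrightarrow> prob_space.indep_set M (sets (vimage_algebra (space M) (S r) (count_space UNIV))) (sets (Hist r))"
    \<comment> \<open>unbiased stochastic gradients: E[G r i k | Fh r i k] = gradF i (theta_loc r i (k-1))\<close>
    and Fh_sub: "\<And>r i k. 1 \<le> r \<Longrightarrow> i < m \<Longrightarrow> 1 \<le> k \<Longrightarrow> k \<le> K \<Longrightarrow> subalgebra M (Fh r i k)"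
    and Fh_meas: "\<And>r i k. 1 \<le> r \<Longrightarrow> i < m \<Longrightarrow> 1 \<le> k \<Longrightarrow> k \<le> K \<Longrightarrow>
        theta_loc r i (k - 1) \<in> borel_measurable (Fh r i k)"
    and unbiased: "\<And>r i k A. 1 \<le> r \<Longrightarrow> i < m \<Longrightarrow> 1 \<le> k \<Longrightarrow> k \<le> K \<Longrightarrow> A \<in> sets (Fh r i k) \<Longrightarrow>
        (LINT w:A|M. G r i k w) = (LINT w:A|M. gradF i (theta_loc r i (k - 1) w))"
    \<comment> \<open>finite second moments\<close>
    and sq_theta: "\<And>r. sq_integrable M (theta r)"
    and sq_mv: "\<And>r. sq_integrable M (mv r)"
    and sq_c: "\<And>r i. i < m \<Longrightarrow> sq_integrable M (c r i)"
    and sq_loc: "\<And>r i k. i < m \<Longrightarrow> k \<le> K \<Longrightarrow> sq_integrable M (theta_loc r i k)"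
    and sq_G: "\<And>r i k. i < m \<Longrightarrow> 1 \<le> k \<Longrightarrow> k \<le> K \<Longrightarrow> sq_integrable M (G r i k)"
    and F_int: "\<And>r i. i < m \<Longrightarrow> integrable M (\<lambda>w. F i (theta r w))"
    and t_pos: "1 \<le> t"
  shows
   "(1 / real m) * (\<Sum>i<m. (norm ((\<integral>w. c t i w \<partial>M) - gradF i theta_star))\<^sup>2)
    \<le> (1 - real s / real m) * ((1 / real m) * (\<Sum>i<m. (norm ((\<integral>w. c (t - 1) i w \<partial>M) - gradF i theta_star))\<^sup>2))
      + real s / real m *
        (4 * beta * ((\<integral>w. (1 / real m) * (\<Sum>i<m. F i (theta (t - 1) w)) \<partial>M) - (1 / real m) * (\<Sum>i<m. F i theta_star))
         + 2 * beta\<^sup>2 * ((1 / (real K * real m)) *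
              (\<Sum>k\<in>{1..K}. \<Sum>i<m. \<integral>w. (norm (theta_loc t i k w - theta (t - 1) w))\<^sup>2 \<partial>M)))"
  
proof -
  interpret P: prob_space M by (rule M)
  have t1: "1 \<le> t" by (rule t_pos)
  define p where "p = real s / real m"
  define gs where "gs i = gradF i theta_star" for i
  define Y where "Y i w = (1 / real K) *\<^sub>R (\<Sum>k\<in>{1..K}. G t i k w)" for i w
  define Ai where "Ai i = (norm ((\<integral>w. c (t - 1) i w \<partial>M) - gradF i theta_star))\<^sup>2" for i
  define Ci where "Ci i = (norm ((\<integral>w. c t i w \<partial>M) - gradF i theta_star))\<^sup>2" for i
  define Bi where "Bi i = (norm ((\<integral>w. Y i w \<partial>M) - gradF i theta_star))\<^sup>2" for i
  define a where "a i k = (\<integral>w. (norm (theta_loc t i k w - theta (t - 1) w))\<^sup>2 \<partial>M)" for i k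
  define Di where "Di i = (1 / real K) * (\<Sum>k\<in>{1..K}. a i k)" for i
  define Hi where "Hi i = (\<integral>w. (norm (gradF i (theta (t - 1) w) - gradF i theta_star))\<^sup>2 \<partial>M)" for i
  have Kpos: "0 < real K" using K_pos by simp
  have mpos: "0 < real m" using m_pos by simp
  have p01: "0 \<le> p" "p \<le> 1" using s_range mpos unfolding p_def by auto
  have sqth: "sq_integrable M (theta (t - 1))" by (rule sq_theta)
  have sqglip: "sq_integrable M (\<lambda>w. gradF i (X w))" if "i < m" "sq_integrable M X" for i X
    by (rule P.sq_lip[of X beta]) (use smooth that beta_pos in \<open>auto simp: smooth_grad_def\<close>)
  have probi: "P.prob {w\<in>space M. i \<in> S t w} = p" if i: "i < m" for i
  proof -
    have "{w\<in>space M. i \<in> S t w} = S t -` {T. i \<in> T} \<inter> space M" by auto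
    hence "P.prob {w\<in>space M. i \<in> S t w} = measure (distr M (count_space UNIV) (S t)) {T. i \<in> T}"
      using measure_distr[OF S_meas[OF t1], of "{T. i \<in> T}"] by simp
    also have "\<dots> = measure_pmf.prob (uniform_subsets m s) {T. i \<in> T}" using S_unif[OF t1] by simp
    also have "\<dots> = p" unfolding p_def using prob_in_uniform[OF i s_range] .
    finally show ?thesis .
  qed
  have Yint: "integrable M (Y i)" if i: "i < m" for i
    unfolding Y_def
    by (intro integrable_scaleR_right integrable_sum) (use sq_G[OF i] in \<open>auto simp: sq_integrable_def\<close>)
  have Ec: "(\<integral>w. c t i w \<partial>M) = p *\<^sub>R (\<integral>w. Y i w \<partial>M) + (1 - p) *\<^sub>R (\<integral>w. c (t - 1) i w \<partial>M)"
    if i: "i < m" for i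
  proof -
    have YH: "Y i \<in> borel_measurable (Hist t)" unfolding Y_def
      by (intro borel_measurable_scaleR borel_measurable_const borel_measurable_sum)
        (use Hist_G[OF t1 i] in auto)
    have ZH: "c (t - 1) i \<in> borel_measurable (Hist t)" by (rule Hist_c[OF t1 i])
    have Zint: "integrable M (c (t - 1) i)" using sq_c[OF i] by (simp add: sq_integrable_def)
    note e1 = P.indep_indicator_integral[OF S_meas[OF t1] Hist_sub[OF t1] S_indep[OF t1] YH Yint[OF i], of i]
    note e2 = P.indep_indicator_integral[OF S_meas[OF t1] Hist_sub[OF t1] S_indep[OF t1] ZH Zint, of i]
    have int1: "integrable M (\<lambda>w. if i \<in> S t w then Y i w else 0)"
      by (rule P.integrable_if_in[OF S_meas[OF t1] Yint[OF i]])
    have int2: "integrable M (\<lambda>w. if i \<in> S t w then c (t - 1) i w else 0)"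
      by (rule P.integrable_if_in[OF S_meas[OF t1] Zint])
    have ceq: "c t i = (\<lambda>w. (if i \<in> S t w then Y i w else 0) + (c (t - 1) i w - (if i \<in> S t w then c (t - 1) i w else 0)))"
      using cupd[OF t1 i] by (auto simp: fun_eq_iff Y_def)
    have "(\<integral>w. c t i w \<partial>M) = (\<integral>w. (if i \<in> S t w then Y i w else 0) \<partial>M)
        + ((\<integral>w. c (t - 1) i w \<partial>M) - (\<integral>w. (if i \<in> S t w then c (t - 1) i w else 0) \<partial>M))"
      apply (subst ceq)
      apply (subst Bochner_Integration.integral_add)
        apply (rule int1)
       apply (rule Bochner_Integration.integrable_diff[OF Zint int2])
      apply (subst Bochner_Integration.integral_diff[OF Zint int2])
      apply (rule refl)
      done
    also have "\<dots> = p *\<^sub>R (\<integral>w. Y i w \<partial>M) + ((\<integral>w. c (t - 1) i w \<partial>M) - p *\<^sub>R (\<integral>w. c (t - 1) i w \<partial>M))"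
      using e1 e2 probi[OF i] by simp
    also have "\<dots> = p *\<^sub>R (\<integral>w. Y i w \<partial>M) + (1 - p) *\<^sub>R (\<integral>w. c (t - 1) i w \<partial>M)"
      by (simp add: algebra_simps)
    finally show ?thesis .
  qed
  have Cb: "Ci i \<le> (1 - p) * Ai i + p * Bi i" if i: "i < m" for i
  proof -
    define u where "u = (\<integral>w. Y i w \<partial>M) - gradF i theta_star"
    define v where "v = (\<integral>w. c (t - 1) i w \<partial>M) - gradF i theta_star"
    have "(\<integral>w. c t i w \<partial>M) - gradF i theta_star = p *\<^sub>R u + (1 - p) *\<^sub>R v"
      using Ec[OF i] unfolding u_def v_def by (simp add: algebra_simps)
    hence "Ci i = (norm (p *\<^sub>R u + (1 - p) *\<^sub>R v))\<^sup>2" unfolding Ci_def by simp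
    moreover have "Ai i = (norm v)\<^sup>2" "Bi i = (norm u)\<^sup>2" unfolding Ai_def Bi_def u_def v_def by simp_all
    ultimately show ?thesis using convex_norm_sq[OF p01, of u v] by (simp add: add.commute)
  qed
  have EG: "(\<integral>w. G t i k w \<partial>M) = (\<integral>w. gradF i (theta_loc t i (k - 1) w) \<partial>M)"
    if i: "i < m" and k: "k \<in> {1..K}" for i k
  proof -
    have k1: "1 \<le> k" "k \<le> K" using k by auto
    have sub: "subalgebra M (Fh t i k)" by (rule Fh_sub[OF t1 i k1])
    have sp: "space M \<in> sets (Fh t i k)" using sub unfolding subalgebra_def by (metis sets.top)
    have iG: "integrable M (G t i k)" using sq_G[OF i k1] by (simp add: sq_integrable_def)
    have iL: "integrable M (\<lambda>w. gradF i (theta_loc t i (k - 1) w))"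
    proof -
      have kK: "k - 1 \<le> K" using k1 by linarith
      show ?thesis using sqglip[OF i sq_loc[OF i kK, where r=t]] by (simp add: sq_integrable_def)
    qed
    show ?thesis using unbiased[OF t1 i k1 sp] set_integral_space[OF iG] set_integral_space[OF iL] by simp
  qed
  have sqV: "sq_integrable M (\<lambda>w. gradF i (theta_loc t i (k - 1) w) - gs i)"
    if i: "i < m" and k: "k \<in> {1..K}" for i k
    by (rule P.sq_diff[OF sqglip[OF i sq_loc] P.sq_const]) (use i k in auto)
  have EYg: "(\<integral>w. Y i w \<partial>M) - gs i = (1 / real K) *\<^sub>R (\<Sum>k\<in>{1..K}. (\<integral>w. gradF i (theta_loc t i (k - 1) w) - gs i \<partial>M))"
    if i: "i < m" for i
  proof -
    have "(\<integral>w. Y i w \<partial>M) = (1 / real K) *\<^sub>R (\<Sum>k\<in>{1..K}. (\<integral>w. G t i k w \<partial>M))"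
    proof -
      have "(\<integral>w. (\<Sum>k\<in>{1..K}. G t i k w) \<partial>M) = (\<Sum>k\<in>{1..K}. \<integral>w. G t i k w \<partial>M)"
        by (rule Bochner_Integration.integral_sum) (use sq_G[OF i] in \<open>auto simp: sq_integrable_def\<close>)
      thus ?thesis by (simp add: Y_def)
    qed
    also have "\<dots> = (1 / real K) *\<^sub>R (\<Sum>k\<in>{1..K}. (\<integral>w. gradF i (theta_loc t i (k - 1) w) \<partial>M))"
      using EG[OF i] by simp
    finally have e: "(\<integral>w. Y i w \<partial>M) = (1 / real K) *\<^sub>R (\<Sum>k\<in>{1..K}. (\<integral>w. gradF i (theta_loc t i (k - 1) w) \<partial>M))" .
    have e2: "(\<integral>w. gradF i (theta_loc t i (k - 1) w) - gs i \<partial>M) = (\<integral>w. gradF i (theta_loc t i (k - 1) w) \<partial>M) - gs i"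
      if k: "k \<in> {1..K}" for k
    proof -
      have iL: "integrable M (\<lambda>w. gradF i (theta_loc t i (k - 1) w))"
      proof -
        have kK: "k - 1 \<le> K" using k by auto
        show ?thesis using sqglip[OF i sq_loc[OF i kK, where r=t]] by (simp add: sq_integrable_def)
      qed
      show ?thesis using iL by (simp add: Bochner_Integration.integral_diff P.prob_space)
    qed
    have s1: "(\<Sum>k\<in>{1..K}. (\<integral>w. gradF i (theta_loc t i (k - 1) w) - gs i \<partial>M))
        = (\<Sum>k\<in>{1..K}. (\<integral>w. gradF i (theta_loc t i (k - 1) w) \<partial>M)) - (\<Sum>k\<in>{1..K}. gs i)"
      using e2 by (simp add: sum_subtractf)
    have s2: "(\<Sum>k\<in>{1..K}. gs i) = real K *\<^sub>R gs i" using sum_constant_scaleR[of "gs i" "{1..K}"] by simp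
    have "(1 / real K) *\<^sub>R (\<Sum>k\<in>{1..K}. (\<integral>w. gradF i (theta_loc t i (k - 1) w) - gs i \<partial>M))
        = (1 / real K) *\<^sub>R (\<Sum>k\<in>{1..K}. (\<integral>w. gradF i (theta_loc t i (k - 1) w) \<partial>M)) - (1 / real K) *\<^sub>R (real K *\<^sub>R gs i)"
      unfolding s1 s2 by (simp add: scaleR_diff_right)
    also have "\<dots> = (\<integral>w. Y i w \<partial>M) - gs i" using e Kpos by simp
    finally show ?thesis by simp
  qed
  have Bb1: "Bi i \<le> (1 / real K) * (\<Sum>k\<in>{1..K}. \<integral>w. (norm (gradF i (theta_loc t i (k - 1) w) - gs i))\<^sup>2 \<partial>M)"
    if i: "i < m" for i
  proof -
    have "Bi i = (norm ((1 / real K) *\<^sub>R (\<Sum>k\<in>{1..K}. (\<integral>w. gradF i (theta_loc t i (k - 1) w) - gs i \<partial>M))))\<^sup>2"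
      unfolding Bi_def using EYg[OF i] by (simp add: gs_def)
    also have "\<dots> \<le> (1 / real K) * (\<Sum>k\<in>{1..K}. (norm (\<integral>w. gradF i (theta_loc t i (k - 1) w) - gs i \<partial>M))\<^sup>2)"
      by (rule avg_norm_sq[OF K_pos])
    also have "\<dots> \<le> (1 / real K) * (\<Sum>k\<in>{1..K}. \<integral>w. (norm (gradF i (theta_loc t i (k - 1) w) - gs i))\<^sup>2 \<partial>M)"
      using Kpos by (intro mult_left_mono sum_mono P.sq_jensen sqV[OF i]) auto
    finally show ?thesis .
  qed
  have sqD: "sq_integrable M (\<lambda>w. theta_loc t i k w - theta (t - 1) w)" if i: "i < m" and k: "k \<le> K" for i k
    by (rule P.sq_diff[OF sq_loc[OF i k] sqth])
  have sqH: "sq_integrable M (\<lambda>w. gradF i (theta (t - 1) w) - gradF i theta_star)" if i: "i < m" for i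
    by (rule P.sq_diff[OF sqglip[OF i sqth] P.sq_const])
  have Vb: "(\<integral>w. (norm (gradF i (theta_loc t i (k - 1) w) - gs i))\<^sup>2 \<partial>M) \<le> 2 * beta\<^sup>2 * a i (k - 1) + 2 * Hi i"
    if i: "i < m" and k: "k \<in> {1..K}" for i k
  proof -
    have kK: "k - 1 \<le> K" using k by auto
    have pw: "(norm (gradF i (theta_loc t i (k - 1) w) - gs i))\<^sup>2
        \<le> 2 * beta\<^sup>2 * (norm (theta_loc t i (k - 1) w - theta (t - 1) w))\<^sup>2
          + 2 * (norm (gradF i (theta (t - 1) w) - gradF i theta_star))\<^sup>2" for w
    proof -
      have "gradF i (theta_loc t i (k - 1) w) - gs i = (gradF i (theta_loc t i (k - 1) w) - gradF i (theta (t - 1) w))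
           + (gradF i (theta (t - 1) w) - gradF i theta_star)" unfolding gs_def by simp
      hence "(norm (gradF i (theta_loc t i (k - 1) w) - gs i))\<^sup>2
          \<le> 2 * (norm (gradF i (theta_loc t i (k - 1) w) - gradF i (theta (t - 1) w)))\<^sup>2
            + 2 * (norm (gradF i (theta (t - 1) w) - gradF i theta_star))\<^sup>2"
        using sq_ineq by metis
      moreover have "norm (gradF i (theta_loc t i (k - 1) w) - gradF i (theta (t - 1) w))
          \<le> beta * norm (theta_loc t i (k - 1) w - theta (t - 1) w)"
        using smooth[OF i] unfolding smooth_grad_def by blast
      hence "(norm (gradF i (theta_loc t i (k - 1) w) - gradF i (theta (t - 1) w)))\<^sup>2
          \<le> beta\<^sup>2 * (norm (theta_loc t i (k - 1) w - theta (t - 1) w))\<^sup>2"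
        by (metis norm_ge_zero power_mono power_mult_distrib)
      ultimately show ?thesis by linarith
    qed
    have i1: "integrable M (\<lambda>w. (norm (gradF i (theta_loc t i (k - 1) w) - gs i))\<^sup>2)"
      using sqV[OF i k] by (simp add: sq_integrable_def)
    have iX: "integrable M (\<lambda>w. (norm (theta_loc t i (k - 1) w - theta (t - 1) w))\<^sup>2)"
      using sqD[OF i kK] by (simp add: sq_integrable_def)
    have iZ: "integrable M (\<lambda>w. (norm (gradF i (theta (t - 1) w) - gradF i theta_star))\<^sup>2)"
      using sqH[OF i] by (simp add: sq_integrable_def)
    have "(\<integral>w. (norm (gradF i (theta_loc t i (k - 1) w) - gs i))\<^sup>2 \<partial>M)
        \<le> (\<integral>w. 2 * beta\<^sup>2 * (norm (theta_loc t i (k - 1) w - theta (t - 1) w))\<^sup>2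
          + 2 * (norm (gradF i (theta (t - 1) w) - gradF i theta_star))\<^sup>2 \<partial>M)"
      by (rule integral_mono[OF i1 _ pw]) (use iX iZ in simp)
    also have "\<dots> = 2 * beta\<^sup>2 * a i (k - 1) + 2 * Hi i"
      unfolding a_def Hi_def using iX iZ by simp
    finally show ?thesis .
  qed
  have a0: "a i 0 = 0" if i: "i < m" for i
    unfolding a_def using loc0[OF t1 i] by simp
  have anonneg: "0 \<le> a i k" for i k
    unfolding a_def by (rule Bochner_Integration.integral_nonneg) simp
  have ashift: "(\<Sum>k\<in>{1..K}. a i (k - 1)) \<le> (\<Sum>k\<in>{1..K}. a i k)" if i: "i < m" for i
    using shift_sum[of "a i" K] a0[OF i] anonneg[of i K] by linarith
  have Bb: "Bi i \<le> 2 * beta\<^sup>2 * Di i + 2 * Hi i" if i: "i < m" for i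
  proof -
    have "Bi i \<le> (1 / real K) * (\<Sum>k\<in>{1..K}. 2 * beta\<^sup>2 * a i (k - 1) + 2 * Hi i)"
      using Bb1[OF i] Vb[OF i] Kpos
      by (smt (verit, ccfv_SIG) divide_nonneg_nonneg mult_left_mono of_nat_0_le_iff sum_mono zero_le_one)
    also have "\<dots> = 2 * beta\<^sup>2 * ((1 / real K) * (\<Sum>k\<in>{1..K}. a i (k - 1))) + 2 * Hi i"
      using Kpos by (simp add: sum.distrib sum_distrib_left[symmetric] field_simps)
    also have "\<dots> \<le> 2 * beta\<^sup>2 * Di i + 2 * Hi i"
      unfolding Di_def using ashift[OF i] Kpos
      by (intro add_right_mono mult_left_mono) (auto simp: divide_right_mono)
    finally show ?thesis .
  qed
  have zero: "(\<Sum>i<m. gradF i theta_star) = 0" by (rule grad_sum_zero[OF grad m_pos opt])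
  have iF: "integrable M (\<lambda>w. \<Sum>i<m. F i (theta (t - 1) w))"
    by (rule Bochner_Integration.integrable_sum) (use F_int in auto)
  have Hsum: "(\<Sum>i<m. Hi i) \<le> 2 * beta * ((\<integral>w. (\<Sum>i<m. F i (theta (t - 1) w)) \<partial>M) - (\<Sum>i<m. F i theta_star))"
  proof -
    have iH: "integrable M (\<lambda>w. (norm (gradF i (theta (t - 1) w) - gradF i theta_star))\<^sup>2)" if i: "i \<in> {..<m}" for i
      using sqH[of i] i by (simp add: sq_integrable_def)
    have "(\<Sum>i<m. Hi i) = (\<integral>w. (\<Sum>i<m. (norm (gradF i (theta (t - 1) w) - gradF i theta_star))\<^sup>2) \<partial>M)"
      unfolding Hi_def by (rule Bochner_Integration.integral_sum[symmetric]) (rule iH)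
    also have "\<dots> \<le> (\<integral>w. 2 * beta * ((\<Sum>i<m. F i (theta (t - 1) w)) - (\<Sum>i<m. F i theta_star)) \<partial>M)"
    proof (rule integral_mono)
      show "integrable M (\<lambda>w. \<Sum>i<m. (norm (gradF i (theta (t - 1) w) - gradF i theta_star))\<^sup>2)"
        by (rule Bochner_Integration.integrable_sum) (rule iH)
      show "integrable M (\<lambda>w. 2 * beta * ((\<Sum>i<m. F i (theta (t - 1) w)) - (\<Sum>i<m. F i theta_star)))"
        using iF by simp
      fix w
      show "(\<Sum>i<m. (norm (gradF i (theta (t - 1) w) - gradF i theta_star))\<^sup>2)
          \<le> 2 * beta * ((\<Sum>i<m. F i (theta (t - 1) w)) - (\<Sum>i<m. F i theta_star))"
        by (rule sum_grad_bound[OF grad mu_nonneg sconv beta_pos smooth zero])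
    qed
    also have "\<dots> = 2 * beta * ((\<integral>w. (\<Sum>i<m. F i (theta (t - 1) w)) \<partial>M) - (\<Sum>i<m. F i theta_star))"
      using iF by (simp add: Bochner_Integration.integral_diff P.prob_space)
    finally show ?thesis .
  qed
  have EFm: "(\<integral>w. (1 / real m) * (\<Sum>i<m. F i (theta (t - 1) w)) \<partial>M) = (1 / real m) * (\<integral>w. (\<Sum>i<m. F i (theta (t - 1) w)) \<partial>M)"
    by simp
  have sumD: "(1 / real m) * (\<Sum>i<m. Di i) = (1 / (real K * real m)) * (\<Sum>k\<in>{1..K}. \<Sum>i<m. a i k)"
  proof -
    have "(\<Sum>i<m. Di i) = (1 / real K) * (\<Sum>i<m. \<Sum>k\<in>{1..K}. a i k)"
      unfolding Di_def by (simp add: sum_distrib_left)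
    also have "(\<Sum>i<m. \<Sum>k\<in>{1..K}. a i k) = (\<Sum>k\<in>{1..K}. \<Sum>i<m. a i k)"
      by (rule sum.swap)
    finally show ?thesis by simp
  qed
  have f1: "(1 / real m) * (\<Sum>i<m. Ci i) \<le> (1 - p) * ((1 / real m) * (\<Sum>i<m. Ai i)) + p * ((1 / real m) * (\<Sum>i<m. Bi i))"
  proof -
    have "(\<Sum>i<m. Ci i) \<le> (\<Sum>i<m. (1 - p) * Ai i + p * Bi i)" by (rule sum_mono) (use Cb in auto)
    also have "\<dots> = (1 - p) * (\<Sum>i<m. Ai i) + p * (\<Sum>i<m. Bi i)"
      by (simp add: sum.distrib sum_distrib_left)
    finally show ?thesis using mpos by (simp add: field_simps divide_right_mono)
  qed
  have f2: "(1 / real m) * (\<Sum>i<m. Bi i) \<le> 2 * beta\<^sup>2 * ((1 / (real K * real m)) * (\<Sum>k\<in>{1..K}. \<Sum>i<m. a i k))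
      + 4 * beta * ((\<integral>w. (1 / real m) * (\<Sum>i<m. F i (theta (t - 1) w)) \<partial>M) - (1 / real m) * (\<Sum>i<m. F i theta_star))"
  proof -
    have "(\<Sum>i<m. Bi i) \<le> (\<Sum>i<m. 2 * beta\<^sup>2 * Di i + 2 * Hi i)" by (rule sum_mono) (use Bb in auto)
    also have "\<dots> = 2 * beta\<^sup>2 * (\<Sum>i<m. Di i) + 2 * (\<Sum>i<m. Hi i)"
      by (simp add: sum.distrib sum_distrib_left)
    finally have h: "(\<Sum>i<m. Bi i) \<le> 2 * beta\<^sup>2 * (\<Sum>i<m. Di i) + 2 * (\<Sum>i<m. Hi i)" .
    have "(1 / real m) * (\<Sum>i<m. Bi i) \<le> 2 * beta\<^sup>2 * ((1 / real m) * (\<Sum>i<m. Di i)) + 2 * ((1 / real m) * (\<Sum>i<m. Hi i))"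
      using mult_left_mono[OF h, of "1 / real m"] mpos by (simp add: algebra_simps)
    moreover have "(1 / real m) * (\<Sum>i<m. Hi i) \<le> (1 / real m) * (2 * beta * ((\<integral>w. (\<Sum>i<m. F i (theta (t - 1) w)) \<partial>M) - (\<Sum>i<m. F i theta_star)))"
      using Hsum mpos by (intro mult_left_mono) auto
    moreover have "(1 / real m) * (2 * beta * ((\<integral>w. (\<Sum>i<m. F i (theta (t - 1) w)) \<partial>M) - (\<Sum>i<m. F i theta_star)))
        = 2 * beta * ((\<integral>w. (1 / real m) * (\<Sum>i<m. F i (theta (t - 1) w)) \<partial>M) - (1 / real m) * (\<Sum>i<m. F i theta_star))"
      unfolding EFm by (simp add: algebra_simps)
    ultimately show ?thesis unfolding sumD by linarith
  qed
  have final: "(1 / real m) * (\<Sum>i<m. Ci i) \<le> (1 - real s / real m) * ((1 / real m) * (\<Sum>i<m. Ai i))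
      + real s / real m * (4 * beta * ((\<integral>w. (1 / real m) * (\<Sum>i<m. F i (theta (t - 1) w)) \<partial>M) - (1 / real m) * (\<Sum>i<m. F i theta_star))
         + 2 * beta\<^sup>2 * ((1 / (real K * real m)) * (\<Sum>k\<in>{1..K}. \<Sum>i<m. a i k)))"
  proof -
    have "p * ((1 / real m) * (\<Sum>i<m. Bi i)) \<le> p * (2 * beta\<^sup>2 * ((1 / (real K * real m)) * (\<Sum>k\<in>{1..K}. \<Sum>i<m. a i k))
      + 4 * beta * ((\<integral>w. (1 / real m) * (\<Sum>i<m. F i (theta (t - 1) w)) \<partial>M) - (1 / real m) * (\<Sum>i<m. F i theta_star)))"
      by (rule mult_left_mono[OF f2 p01(1)])
    thus ?thesis using f1 unfolding p_def by (simp add: algebra_simps)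
  qed
  show ?thesis using final unfolding Ci_def Ai_def a_def .
qed

end
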